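(* Let $m\in\{2,3,\dots\}\cup\{\infty\}$ and let $T_n$ be uniformly distributed on $\mathsf{T}^{(m)}_n$. Given $T_n$, let $v^*$ be a uniformly chosen vertex of $T_n$ and $T^{( * )}_n$ the subtree of $T_n$ rooted at $v^*$ (consisting of $v^*$ and its descendants). Then for every $1\leq k\leq n$, conditionally on $\#T^{( * )}_n=k$, $T^{( * )}_n$ is uniformly distributed on $\mathsf{T}^{(m)}_k$.
   Context: $\mathsf{T}^{(m)}_n$ is the set of rooted unordered trees with $n$ vertices in which every vertex has at most $m$ children; $\#t$ is the number of vertices of $t$. *)

theory Defs
  imports "HOL-Probability.Probability" "HOL-Library.Multiset" "HOL-Library.Extended_Nat"
begin

text \<open>Rooted unordered (unlabelled) trees: a node is the multiset of its child subtrees.\<close>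
datatype utree = Node "utree multiset"

primrec tsize :: "utree \<Rightarrow> nat" where
  "tsize (Node M) = Suc (sum_mset (image_mset tsize M))"

primrec bounded_outdeg :: "enat \<Rightarrow> utree \<Rightarrow> bool" where
  "bounded_outdeg m (Node M) = (enat (size M) \<le> m \<and> (\<forall>b \<in># image_mset (bounded_outdeg m) M. b))"

definition trees :: "enat \<Rightarrow> nat \<Rightarrow> utree set" where
  "trees m n = {t. tsize t = n \<and> bounded_outdeg m t}"

text \<open>Multiset of fringe subtrees: one entry per vertex (the subtree rooted there).\<close>
primrec fringe :: "utree \<Rightarrow> utree multiset" where
  "fringe (Node M) = add_mset (Node M) (sum_mset (image_mset fringe M))"

definition fringe_subtree_pmf :: "enat \<Rightarrow> nat \<Rightarrow> utree pmf" where
  "fringe_subtree_pmf m n = bind_pmf (pmf_of_set (trees m n)) (\<lambda>T. pmf_of_multiset (fringe T))"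

end

theory Submission
  imports Defs
begin

lemma count_sum_mset_image:
  "count (sum_mset (image_mset f M)) x = sum_mset (image_mset (\<lambda>c. count (f c) x) M)"
  by (induct M) auto

lemma tsize_pos: "tsize t \<ge> 1"
  by (cases t) auto

lemma child_smaller: "x \<in># M \<Longrightarrow> tsize x < tsize (Node M)"
proof -
  assume "x \<in># M"
  then have "tsize x \<le> sum_mset (image_mset tsize M)"
    by (metis multi_member_split image_mset_add_mset sum_mset.add_mset le_add1)
  then show ?thesis by simp
qed

lemma fringe_size_le: "s \<in># fringe t \<Longrightarrow> tsize s \<le> tsize t"
proof (induct t arbitrary: s)
  case (Node M)
  show ?case
  proof (cases "s = Node M")
    case False
    with Node.prems obtain c where c: "c \<in># M" "s \<in># fringe c" by auto
    with Node.hyps have "tsize s \<le> tsize c" by blast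
    with child_smaller[OF c(1)] show ?thesis by simp
  qed simp
qed

lemma count_fringe_zero:
  assumes "tsize s \<ge> tsize t" "s \<noteq> t" shows "count (fringe t) s = 0"
proof (cases t)
  case (Node M)
  have "\<not> s \<in># sum_mset (image_mset fringe M)"
  proof
    assume "s \<in># sum_mset (image_mset fringe M)"
    then obtain c where "c \<in># M" "s \<in># fringe c" by auto
    then have "tsize s < tsize t" using fringe_size_le child_smaller Node by fastforce
    with assms show False by simp
  qed
  then have "count (sum_mset (image_mset fringe M)) s = 0" using not_in_iff by metis
  then show ?thesis using assms Node by simp
qed

lemma count_fringe_self: "count (fringe t) t = 1"
proof (cases t)
  case (Node M)
  have "\<not> t \<in># sum_mset (image_mset fringe M)"
  proof
    assume "t \<in># sum_mset (image_mset fringe M)"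
    then obtain c where "c \<in># M" "t \<in># fringe c" by auto
    then have "tsize t < tsize t" using fringe_size_le child_smaller Node by fastforce
    then show False by simp
  qed
  then have "count (sum_mset (image_mset fringe M)) t = 0" using not_in_iff by metis
  then show ?thesis using Node by simp
qed

lemma fringe_bounded: "s \<in># fringe t \<Longrightarrow> bounded_outdeg m t \<Longrightarrow> bounded_outdeg m s"
proof (induct t arbitrary: s)
  case (Node M)
  show ?case
  proof (cases "s = Node M")
    case False
    with Node.prems obtain c where c: "c \<in># M" "s \<in># fringe c" by auto
    with Node.prems have "bounded_outdeg m c" by auto
    with Node.hyps c show ?thesis by blast
  qed (use Node.prems in simp)
qed

lemma size_sum_image: "size (sum_mset (image_mset (f :: 'a \<Rightarrow> 'b multiset) M)) = sum_mset (image_mset (\<lambda>c. size (f c)) M)"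
  by (induct M) (auto simp: size_union)

lemma fringe_size: "size (fringe t) = tsize t"
proof (induct t)
  case (Node M)
  have "image_mset (\<lambda>c. size (fringe c)) M = image_mset tsize M"
    using Node by (intro image_mset_cong) auto
  then show ?case by (simp add: size_sum_image multiset.map_comp o_def)
qed

primrec sw :: "utree \<Rightarrow> utree \<Rightarrow> utree \<Rightarrow> utree" where
  "sw a b (Node M) = (if Node M = a then b else if Node M = b then a else Node (image_mset (sw a b) M))"

lemma sw_a: "sw a b a = b"
  by (cases a) simp

lemma sw_b: "sw a b b = a"
  by (cases b) auto

lemma sw_small: "tsize t < tsize a \<Longrightarrow> tsize a = tsize b \<Longrightarrow> sw a b t = t"
proof (induct t)
  case (Node M)
  have ne: "Node M \<noteq> a" "Node M \<noteq> b" using Node.prems by auto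
  have "image_mset (sw a b) M = image_mset id M"
  proof (rule image_mset_cong)
    fix x assume x: "x \<in># M"
    have "tsize x < tsize a" using child_smaller[OF x] Node.prems(1) by linarith
    then show "sw a b x = id x" using Node.hyps[OF x] Node.prems(2) by simp
  qed
  then have "image_mset (sw a b) M = M" by simp
  then show ?case using ne by simp
qed

lemma sw_size: "tsize a = tsize b \<Longrightarrow> tsize (sw a b t) = tsize t"
proof (induct t)
  case (Node M)
  have "image_mset (\<lambda>x. tsize (sw a b x)) M = image_mset tsize M"
  proof (rule image_mset_cong)
    fix x assume x: "x \<in># M"
    show "tsize (sw a b x) = tsize x" using Node.hyps[OF x] Node.prems by simp
  qed
  then have e: "image_mset tsize (image_mset (sw a b) M) = image_mset tsize M"
    by (simp add: multiset.map_comp o_def)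
  show ?case
  proof (cases "Node M = a \<or> Node M = b")
    case True then show ?thesis using Node.prems by (elim disjE) (auto simp: sw_a sw_b)
  next
    case False then show ?thesis using e by simp
  qed
qed

lemma sw_invol:
  assumes ab: "tsize a = tsize b"
  shows "sw a b (sw a b t) = t \<and> (t \<noteq> a \<longrightarrow> t \<noteq> b \<longrightarrow> sw a b t \<noteq> a \<and> sw a b t \<noteq> b)"
proof (induct t)
  case (Node M)
  have "image_mset (\<lambda>x. sw a b (sw a b x)) M = image_mset id M"
    using Node by (intro image_mset_cong) auto
  then have ih: "image_mset (sw a b) (image_mset (sw a b) M) = M"
    by (simp add: multiset.map_comp o_def)
  have ne: "Node (image_mset (sw a b) M) \<noteq> c" if c: "c = a \<or> c = b" and nM: "Node M \<noteq> a" "Node M \<noteq> b" for c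
  proof
    assume eq: "Node (image_mset (sw a b) M) = c"
    have "tsize c = tsize a" using c ab by auto
    have "image_mset (sw a b) (image_mset (sw a b) M) = image_mset id (image_mset (sw a b) M)"
    proof (intro image_mset_cong)
      fix x assume "x \<in># image_mset (sw a b) M"
      then have "tsize x < tsize a" using child_smaller[of x "image_mset (sw a b) M"] eq \<open>tsize c = tsize a\<close> by simp
      then show "sw a b x = id x" using sw_small ab by simp
    qed
    with ih have "Node M = c" using eq by simp
    with c nM show False by auto
  qed
  show ?case
  proof (cases "Node M = a")
    case True then show ?thesis using sw_a[of a b] sw_b[of a b] by auto
  next
    case False
    show ?thesis
    proof (cases "Node M = b")
      case True then show ?thesis using False sw_a[of a b] sw_b[of a b] by auto
    next
      case False2: False
      have "sw a b (Node M) = Node (image_mset (sw a b) M)" using False False2 by simp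
      moreover have "Node (image_mset (sw a b) M) \<noteq> a" "Node (image_mset (sw a b) M) \<noteq> b"
        using ne False False2 by auto
      ultimately show ?thesis using ih by simp
    qed
  qed
qed

lemma sw_bounded:
  assumes "bounded_outdeg m a" "bounded_outdeg m b"
  shows "bounded_outdeg m t \<Longrightarrow> bounded_outdeg m (sw a b t)"
proof (induct t)
  case (Node M)
  then show ?case using assms by auto
qed

lemma sw_count:
  assumes ab: "tsize a = tsize b"
  shows "count (fringe (sw a b t)) b = count (fringe t) a"
proof (induct t)
  case (Node M)
  show ?case
  proof (cases "Node M = a")
    case True
    have "sw a b (Node M) = b" by (subst sw.simps) (simp add: True)
    then show ?thesis using count_fringe_self[of a] count_fringe_self[of b] True by simp
  next
    case False
    show ?thesis
    proof (cases "Node M = b")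
      case True
      have "sw a b (Node M) = a" by (subst sw.simps) (simp add: True False)
      then show ?thesis using False True ab count_fringe_zero[of b a] count_fringe_zero[of a b] by simp
    next
      case False2: False
      have e: "sw a b (Node M) = Node (image_mset (sw a b) M)" using False False2 by simp
      have n: "Node (image_mset (sw a b) M) \<noteq> b" using sw_invol[OF ab, of "Node M"] False False2 e by simp
      have "image_mset (\<lambda>c. count (fringe (sw a b c)) b) M = image_mset (\<lambda>c. count (fringe c) a) M"
        using Node by (intro image_mset_cong) auto
      then show ?thesis using e n False by (simp add: count_sum_mset_image multiset.map_comp o_def)
    qed
  qed
qed

lemma size_le_sum_tsize: "size M \<le> sum_mset (image_mset tsize M)"
proof (induct M)
  case (add x M) then show ?case using tsize_pos[of x] by simp
qed simp

lemma finite_tsize_le: "finite {t. tsize t \<le> n}"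
proof (induct n)
  case 0
  have "\<not> tsize t \<le> 0" for t using tsize_pos[of t] by simp
  then have e: "{t. tsize t \<le> 0} = {}" by blast
  show ?case by (simp only: e finite.emptyI)
next
  case (Suc n)
  have "{t. tsize t \<le> Suc n} \<subseteq> Node ` (\<Union>j\<le>n. multisets_of_size {t. tsize t \<le> n} j)"
  proof
    fix t assume t: "t \<in> {t. tsize t \<le> Suc n}"
    obtain M where M: "t = Node M" by (cases t)
    have s: "sum_mset (image_mset tsize M) \<le> n" using t M by simp
    have "set_mset M \<subseteq> {t. tsize t \<le> n}"
    proof
      fix c assume "c \<in># M"
      then have "tsize c \<le> sum_mset (image_mset tsize M)"
        by (metis multi_member_split image_mset_add_mset sum_mset.add_mset le_add1)
      with s show "c \<in> {t. tsize t \<le> n}" by simp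
    qed
    moreover have "size M \<le> n" using s size_le_sum_tsize[of M] by simp
    ultimately show "t \<in> Node ` (\<Union>j\<le>n. multisets_of_size {t. tsize t \<le> n} j)"
      using M unfolding multisets_of_size_def by blast
  qed
  moreover have "finite (Node ` (\<Union>j\<le>n. multisets_of_size {t. tsize t \<le> n} j))"
    using Suc by blast
  ultimately show ?case by (rule finite_subset)
qed

lemma finite_trees: "finite (trees m n)"
  by (rule finite_subset[OF _ finite_tsize_le[of n]]) (auto simp: trees_def)

primrec pth :: "nat \<Rightarrow> utree" where
  "pth 0 = Node {#}"
| "pth (Suc j) = Node {#pth j#}"

lemma pth_size: "tsize (pth j) = Suc j"
  by (induct j) auto

lemma pth_bounded: "m \<ge> 1 \<Longrightarrow> bounded_outdeg m (pth j)"
  by (induct j) (auto simp: one_enat_def zero_enat_def[symmetric])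

lemma pth_fringe: "i \<le> j \<Longrightarrow> pth i \<in># fringe (pth j)"
proof (induct j)
  case (Suc j) then show ?case by (cases "i = Suc j") auto
qed simp

lemma pmf_const_eq:
  assumes "finite B" "set_pmf q \<subseteq> B" "\<And>x y. x \<in> B \<Longrightarrow> y \<in> B \<Longrightarrow> pmf q x = pmf q y"
  shows "q = pmf_of_set B"
proof -
  have "B \<noteq> {}" using assms(2) set_pmf_not_empty[of q] by blast
  then obtain b where b: "b \<in> B" by blast
  have "1 = (\<Sum>x\<in>B. pmf q x)" using sum_pmf_eq_1[OF assms(1,2)] by (rule sym)
  also have "\<dots> = (\<Sum>x\<in>B. pmf q b)" by (intro sum.cong refl assms(3) b)
  also have "\<dots> = real (card B) * pmf q b" by (simp only: sum_constant)
  finally have cb: "real (card B) * pmf q b = 1" by (rule sym)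
  have cpos: "real (card B) > 0" using assms(1) b card_gt_0_iff by fastforce
  have pb: "pmf q b = 1 / real (card B)" using cb cpos by (simp add: eq_divide_eq mult.commute)
  show ?thesis
  proof (rule pmf_eqI)
    fix x
    show "pmf q x = pmf (pmf_of_set B) x"
    proof (cases "x \<in> B")
      case True
      then show ?thesis using assms(3)[OF True b] pb pmf_of_set[OF \<open>B \<noteq> {}\<close> assms(1), of x] by simp
    next
      case False
      then have "x \<notin> set_pmf q" using assms(2) by blast
      then show ?thesis using False pmf_of_set[OF \<open>B \<noteq> {}\<close> assms(1), of x] by (simp add: set_pmf_iff)
    qed
  qed
qed


theorem lemma25:
  fixes m :: enat and n k :: nat
  assumes "m \<ge> 2" and "1 \<le> k" and "k \<le> n"
  shows "cond_pmf (fringe_subtree_pmf m n) {t. tsize t = k} = pmf_of_set (trees m k)"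
proof -
  define S where "S = trees m n"
  define B where "B = trees m k"
  define p where "p = fringe_subtree_pmf m n"
  define A where "A = {t. tsize t = k}"
  have "(1::enat) \<le> 2" by simp
  then have m1: "m \<ge> 1" using assms(1) by (rule order_trans)
  have finS: "finite S" unfolding S_def by (rule finite_trees)
  have finB: "finite B" unfolding B_def by (rule finite_trees)
  have pn: "pth (n - 1) \<in> S" using assms pth_size[of "n - 1"] pth_bounded[OF m1]
    by (simp add: S_def trees_def)
  then have SnE: "S \<noteq> {}" by blast
  have fne: "fringe T \<noteq> {#}" for T by (cases T) simp
  have setp: "set_pmf p = (\<Union>T\<in>S. set_mset (fringe T))"
    unfolding p_def fringe_subtree_pmf_def S_def[symmetric] set_bind_pmf set_pmf_of_set[OF SnE finS]
    using set_pmf_of_multiset[OF fne] by simp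
  have "pth (k - 1) \<in># fringe (pth (n - 1))" using assms by (intro pth_fringe) simp
  moreover have "tsize (pth (k - 1)) = k" using assms pth_size[of "k - 1"] by simp
  ultimately have ne: "set_pmf p \<inter> A \<noteq> {}" using pn setp A_def by blast
  have sub: "set_pmf (cond_pmf p A) \<subseteq> B"
  proof
    fix t assume "t \<in> set_pmf (cond_pmf p A)"
    then have "t \<in> set_pmf p" "t \<in> A" using set_cond_pmf[OF ne] by auto
    then obtain T where "T \<in> S" "t \<in># fringe T" "tsize t = k" using setp A_def by auto
    then show "t \<in> B" using fringe_bounded[of t T m] by (simp add: S_def B_def trees_def)
  qed
  have pmfp: "pmf p x = (\<Sum>T\<in>S. real (count (fringe T) x) / real (size (fringe T))) / real (card S)" for x
    unfolding p_def fringe_subtree_pmf_def S_def[symmetric] pmf_bind integral_pmf_of_set[OF SnE finS]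
    using pmf_of_multiset[OF fne] by simp
  have eq: "pmf p x = pmf p y" if x: "x \<in> B" and y: "y \<in> B" for x y
  proof -
    have ab: "tsize x = tsize y" using x y by (simp add: B_def trees_def)
    have bx: "bounded_outdeg m x" "bounded_outdeg m y" using x y by (simp_all add: B_def trees_def)
    have "(\<Sum>T\<in>S. real (count (fringe T) x) / real (size (fringe T)))
        = (\<Sum>T\<in>S. real (count (fringe T) y) / real (size (fringe T)))"
    proof (rule sum.reindex_bij_witness[of S "sw x y" "sw x y"])
      fix a assume a: "a \<in> S"
      show "sw x y (sw x y a) = a" using sw_invol[OF ab] by blast
      show "sw x y a \<in> S" using a sw_size[OF ab, of a] sw_bounded[OF bx, of a]
        by (simp add: S_def trees_def)
      show "real (count (fringe (sw x y a)) y) / real (size (fringe (sw x y a)))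
          = real (count (fringe a) x) / real (size (fringe a))"
        using sw_count[OF ab, of a] sw_size[OF ab, of a] by (simp add: fringe_size)
    next
      fix a assume a: "a \<in> S"
      show "sw x y (sw x y a) = a" using sw_invol[OF ab] by blast
      show "sw x y a \<in> S" using a sw_size[OF ab, of a] sw_bounded[OF bx, of a]
        by (simp add: S_def trees_def)
    qed
    then show ?thesis by (simp add: pmfp)
  qed
  have "cond_pmf p A = pmf_of_set B"
  proof (rule pmf_const_eq[OF finB sub])
    fix x y assume "x \<in> B" "y \<in> B"
    moreover then have "x \<in> A" "y \<in> A" by (simp_all add: A_def B_def trees_def)
    ultimately show "pmf (cond_pmf p A) x = pmf (cond_pmf p A) y"
      using eq[of x y] by (simp only: pmf_cond[OF ne] if_True)
  qed
  then show ?thesis by (simp add: p_def A_def B_def)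
qed

end
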